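(* Let $\psi\in C^2(\mathbb R;\mathbb R_+)$ with $\lim_{r\to\infty}\psi(r)=\infty$, $0<\psi'\le1$ and $\psi''\le0$. Fix $y\in\mathbb R^d$ and set $V_y(x):=\psi(\log(1+|x-y|^2))$. Then for all $t\ge0$ and $x\in\mathbb R^d$, $$\mathscr L_tV_y(x)\le 2\left(\frac{|a_t(x)|+\langle x-y,b_t(x)\rangle^++g^\nu_t(x)}{1+|x-y|^2}+2H^\nu_t(x,y)\right),$$ where $H^\nu_t(x,y):=\int_{B_\ell^c}\log\big(1+\frac{|z|}{1+|x-y|}\big)\nu_{t,x}(dz)$.
   Context: Fix $d\ge1$, $\ell\in(0,1/\sqrt2]$, $B_\ell=\{|z|<\ell\}$. $a:\mathbb R_+\times\mathbb R^d\to$ symmetric nonnegative definite matrices and $b:\mathbb R_+\times\mathbb R^d\to\mathbb R^d$ measurable; $\{\nu_{t,x}\}$ Lévy measures with $g^\nu_t(x):=\int_{B_\ell}|z|^2\nu_{t,x}(dz)<\infty$, $\nu_{t,x}(B_\ell^c)<\infty$. $\mathscr L_tf(x):=\mathrm{tr}(a_t(x)\nabla^2f(x))+b_t(x)\cdot\nabla f(x)+\int(f(x+z)-f(x)-\mathbf 1_{|z|\le\ell}z\cdot\nabla f(x))\nu_{t,x}(dz)$; $r^+:=\max(r,0)$. *)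

theory Defs
  imports "HOL-Analysis.Analysis"
begin

definition grad :: "(real^'n \<Rightarrow> real) \<Rightarrow> real^'n \<Rightarrow> real^'n" where
  "grad f x = (\<chi> i. frechet_derivative f (at x) (axis i 1))"

definition hess :: "(real^'n \<Rightarrow> real) \<Rightarrow> real^'n \<Rightarrow> real^'n^'n" where
  "hess f x = (\<chi> i j. frechet_derivative (\<lambda>y. grad f y $ j) (at x) (axis i 1))"

definition levy_measure :: "(real^'n) measure \<Rightarrow> bool" where
  "levy_measure \<mu> \<longleftrightarrow> sets \<mu> = sets borel \<and> emeasure \<mu> {0} = 0 \<and>
     (\<integral>\<^sup>+ z. ennreal (min 1 (norm z ^ 2)) \<partial>\<mu>) < \<infinity>"

definition gen_op ::
  "(real \<Rightarrow> real^'n \<Rightarrow> real^'n^'n) \<Rightarrow> (real \<Rightarrow> real^'n \<Rightarrow> real^'n) \<Rightarrow>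
   (real \<Rightarrow> real^'n \<Rightarrow> (real^'n) measure) \<Rightarrow> real \<Rightarrow> real \<Rightarrow>
   (real^'n \<Rightarrow> real) \<Rightarrow> real^'n \<Rightarrow> real" where
  "gen_op a b \<nu> l t f x =
     trace (a t x ** hess f x) + b t x \<bullet> grad f x
     + (\<integral> z. (f (x + z) - f x - (if norm z \<le> l then z \<bullet> grad f x else 0)) \<partial>(\<nu> t x))"

definition g_nu :: "(real \<Rightarrow> real^'n \<Rightarrow> (real^'n) measure) \<Rightarrow> real \<Rightarrow> real \<Rightarrow> real^'n \<Rightarrow> ennreal" where
  "g_nu \<nu> l t x = (\<integral>\<^sup>+ z \<in> ball 0 l. ennreal (norm z ^ 2) \<partial>(\<nu> t x))"

definition H_nu :: "(real \<Rightarrow> real^'n \<Rightarrow> (real^'n) measure) \<Rightarrow> real \<Rightarrow> real \<Rightarrow> real^'n \<Rightarrow> real^'n \<Rightarrow> ennreal" where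
  "H_nu \<nu> l t x y = (\<integral>\<^sup>+ z \<in> - ball 0 l. ennreal (ln (1 + norm z / (1 + norm (x - y)))) \<partial>(\<nu> t x))"

definition V_fun :: "(real \<Rightarrow> real) \<Rightarrow> real^'n \<Rightarrow> real^'n \<Rightarrow> real" where
  "V_fun \<psi> y x = \<psi> (ln (1 + norm (x - y) ^ 2))"

end

theory Submission
  imports Defs
begin

lemma q_deriv:
  fixes y x :: "real^'n"
  shows "((\<lambda>x. 1 + norm (x - y) ^ 2) has_derivative (\<lambda>v. 2 * ((x - y) \<bullet> v))) (at x within S)"
proof -
  have e: "(\<lambda>x. 1 + norm (x - y) ^ 2) = (\<lambda>x. 1 + (x - y) \<bullet> (x - y))"
    by (simp add: power2_norm_eq_inner)
  have d1: "((\<lambda>x. 1 + (x - y) \<bullet> (x - y)) has_derivative (\<lambda>v. 0 + ((x - y) \<bullet> (v - 0) + (v - 0) \<bullet> (x - y)))) (at x within S)"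
    by (intro derivative_intros)
  then show ?thesis unfolding e by (simp add: inner_commute)
qed

lemma q_pos: "0 < 1 + norm (z::real^'n) ^ 2"
  by (simp add: add_pos_nonneg)

lemma aux_div: "(g::real) \<noteq> 0 \<Longrightarrow> (a*g - b*c)/(g*g) = a/g - b*c/g^2"
  by (simp add: field_simps power2_eq_square)

lemma hq_deriv:
  fixes y x :: "real^'n"
  shows "((\<lambda>x. ln (1 + norm (x - y) ^ 2)) has_derivative
          (\<lambda>v. 2 * ((x - y) \<bullet> v) / (1 + norm (x - y) ^ 2))) (at x within S)"
  using has_derivative_compose[OF q_deriv DERIV_ln[OF q_pos, THEN has_field_derivative_imp_has_derivative]]
  by (simp add: field_simps)

lemma V_deriv:
  fixes y x :: "real^'n"
  assumes d1: "\<And>r. 0 \<le> r \<Longrightarrow> (\<psi> has_real_derivative \<psi>' r) (at r within {0..})"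
  shows "(V_fun \<psi> y has_derivative
          (\<lambda>v. \<psi>' (ln (1 + norm (x - y) ^ 2)) * (2 * ((x - y) \<bullet> v) / (1 + norm (x - y) ^ 2)))) (at x)"
proof -
  have "((\<lambda>x. \<psi> (ln (1 + norm (x - y) ^ 2))) has_derivative
          (\<lambda>v. \<psi>' (ln (1 + norm (x - y) ^ 2)) * (2 * ((x - y) \<bullet> v) / (1 + norm (x - y) ^ 2)))) (at x)"
    apply (rule has_derivative_in_compose2[where t="{0..}" and g' = "\<lambda>r h. \<psi>' r * h"])
       apply (rule d1[unfolded has_field_derivative_def]; simp)
      apply auto[1]
     apply simp
    apply (rule hq_deriv)
    done
  then show ?thesis by (simp add: V_fun_def[abs_def])
qed

lemma grad_V:
  fixes y x :: "real^'n"
  assumes d1: "\<And>r. 0 \<le> r \<Longrightarrow> (\<psi> has_real_derivative \<psi>' r) (at r within {0..})"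
  shows "grad (V_fun \<psi> y) x = (\<psi>' (ln (1 + norm (x - y) ^ 2)) * 2 / (1 + norm (x - y) ^ 2)) *\<^sub>R (x - y)"
  unfolding grad_def
  by (simp add: frechet_derivative_at[OF V_deriv[OF d1], symmetric] vec_eq_iff inner_axis)

lemma gradj_deriv:
  fixes y x :: "real^'n"
  assumes d1: "\<And>r. 0 \<le> r \<Longrightarrow> (\<psi> has_real_derivative \<psi>' r) (at r within {0..})"
  assumes d2: "\<And>r. 0 \<le> r \<Longrightarrow> (\<psi>' has_real_derivative \<psi>'' r) (at r within {0..})"
  shows "((\<lambda>x. grad (V_fun \<psi> y) x $ j) has_derivative
      (\<lambda>v. \<psi>'' (ln (1 + norm (x - y) ^ 2)) * (2 * ((x - y) \<bullet> v) / (1 + norm (x - y) ^ 2))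
             * (2 * (x - y) $ j / (1 + norm (x - y) ^ 2))
          + \<psi>' (ln (1 + norm (x - y) ^ 2)) * (2 * v $ j / (1 + norm (x - y) ^ 2)
               - 2 * (x - y) $ j * (2 * ((x - y) \<bullet> v)) / (1 + norm (x - y) ^ 2)^2))) (at x)"
proof -
  have A: "((\<lambda>x. \<psi>' (ln (1 + norm (x - y) ^ 2))) has_derivative
          (\<lambda>v. \<psi>'' (ln (1 + norm (x - y) ^ 2)) * (2 * ((x - y) \<bullet> v) / (1 + norm (x - y) ^ 2)))) (at x)"
    apply (rule has_derivative_in_compose2[where t="{0..}" and g' = "\<lambda>r h. \<psi>'' r * h"])
       apply (rule d2[unfolded has_field_derivative_def]; simp)
      apply auto[1]
     apply simp
    apply (rule hq_deriv)
    done
  have B: "((\<lambda>x. 2 * (x - y) $ j / (1 + norm (x - y) ^ 2)) has_derivative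
      (\<lambda>v. 2 * v $ j / (1 + norm (x - y) ^ 2)
               - 2 * (x - y) $ j * (2 * ((x - y) \<bullet> v)) / (1 + norm (x - y) ^ 2)^2)) (at x)"
  proof -
    have N: "((\<lambda>x. 2 * (x - y) $ j) has_derivative (\<lambda>v. 2 * v $ j)) (at x)"
      by (auto intro!: derivative_eq_intros bounded_linear_imp_has_derivative bounded_linear_vec_nth)
    show ?thesis
      apply (rule has_derivative_divide'[OF N q_deriv[of y x], THEN has_derivative_eq_rhs])
      subgoal using q_pos[of "x-y"] by simp
      using q_pos[of "x-y"] by (intro ext, subst aux_div) auto
  qed
  have e: "(\<lambda>x. grad (V_fun \<psi> y) x $ j) = (\<lambda>x. \<psi>' (ln (1 + norm (x - y) ^ 2)) * (2 * (x - y) $ j / (1 + norm (x - y) ^ 2)))"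
    by (simp add: grad_V[OF d1] algebra_simps diff_divide_distrib)
  show ?thesis unfolding e
    using has_derivative_mult[OF A B] by (simp add: algebra_simps)
qed

lemma trace_eq:
  fixes A :: "real^'n^'n" and u :: "real^'n"
  shows "trace (A ** (\<chi> i j. P * (c * u$i) * (c * u$j) + Q * ((if i = j then d else 0) - e * u$j * u$i)))
     = P * (c^2 * (u \<bullet> (A *v u))) + Q * (d * trace A - e * (u \<bullet> (A *v u)))"
proof -
  have "trace (A ** (\<chi> i j. P * (c * u$i) * (c * u$j) + Q * ((if i = j then d else 0) - e * u$j * u$i)))
     = (\<Sum>i\<in>UNIV. \<Sum>k\<in>UNIV. A$i$k * (P * (c * u$k) * (c * u$i) + Q * ((if k = i then d else 0) - e * u$i * u$k)))"
    by (simp add: trace_def matrix_matrix_mult_def)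
  also have "\<dots> = (\<Sum>i\<in>UNIV. P * c^2 * (u$i * (\<Sum>k\<in>UNIV. A$i$k * u$k)) + Q * d * A$i$i - Q * e * (u$i * (\<Sum>k\<in>UNIV. A$i$k * u$k)))"
  proof (rule sum.cong[OF refl])
    fix i
    have m: "\<And>(a::real) b d. a * (if b then d else 0) = (if b then a*d else 0)" by simp
    have "(\<Sum>k\<in>UNIV. A$i$k * (P * (c * u$k) * (c * u$i) + Q * ((if k = i then d else 0) - e * u$i * u$k)))
       = (\<Sum>k\<in>UNIV. P*c^2*(u$i*(A$i$k*u$k)) + Q*(A$i$k * (if k=i then d else 0)) - Q*e*(u$i*(A$i$k*u$k)))"
      by (rule sum.cong[OF refl]) (simp add: algebra_simps power2_eq_square)
    also have "\<dots> = (\<Sum>k\<in>UNIV. P*c^2*(u$i*(A$i$k*u$k))) + (\<Sum>k\<in>UNIV. Q*(A$i$k * (if k=i then d else 0))) - (\<Sum>k\<in>UNIV. Q*e*(u$i*(A$i$k*u$k)))"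
      by (simp add: sum.distrib sum_subtractf)
    also have "(\<Sum>k\<in>UNIV. Q*(A$i$k * (if k=i then d else 0))) = Q * d * A$i$i"
      by (simp only: m mult_if_delta) (simp add: sum.delta' ac_simps)
    finally show "(\<Sum>k\<in>UNIV. A$i$k * (P * (c * u$k) * (c * u$i) + Q * ((if k = i then d else 0) - e * u$i * u$k)))
      = P * c^2 * (u$i * (\<Sum>k\<in>UNIV. A$i$k * u$k)) + Q * d * A$i$i - Q * e * (u$i * (\<Sum>k\<in>UNIV. A$i$k * u$k))"
      by (simp add: sum_distrib_left)
  qed
  also have "\<dots> = P * (c^2 * (u \<bullet> (A *v u))) + Q * (d * trace A - e * (u \<bullet> (A *v u)))"
    by (simp add: trace_def inner_vec_def matrix_vector_mult_def sum.distrib sum_subtractf sum_distrib_left algebra_simps)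
  finally show ?thesis .
qed

lemma trace_nonneg:
  fixes A :: "real^'n^'n"
  assumes "\<And>v. 0 \<le> v \<bullet> (A *v v)"
  shows "0 \<le> trace A"
proof -
  have "A$i$i = axis i 1 \<bullet> (A *v axis i 1)" for i
    by (simp add: matrix_vector_mult_basis inner_axis' column_def)
  then show ?thesis unfolding trace_def using assms by (simp add: sum_nonneg)
qed


lemma deriv_at_pos:
  assumes d: "\<And>r. 0 \<le> r \<Longrightarrow> (f has_real_derivative f' r) (at r within {0..})"
    and r: "0 < r"
  shows "(f has_real_derivative f' r) (at r)"
proof -
  have "(f has_real_derivative f' r) (at r within {0<..})"
    by (rule DERIV_subset[OF d[OF less_imp_le[OF r]]]) auto
  moreover have "at r within {0<..} = at r" by (rule at_within_open) (use r in auto)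
  ultimately show ?thesis by simp
qed

lemma cont_on0:
  assumes d: "\<And>r. 0 \<le> r \<Longrightarrow> (f has_real_derivative f' r) (at r within {0..})"
  shows "continuous_on {0..} f"
  unfolding continuous_on_eq_continuous_within
  using d DERIV_continuous by blast

lemma mvt0:
  assumes d: "\<And>r. 0 \<le> r \<Longrightarrow> (f has_real_derivative f' r) (at r within {0..})"
    and a: "0 \<le> a" and ab: "a < b"
  shows "\<exists>z. a < z \<and> z < b \<and> f b - f a = (b - a) * f' z"
proof -
  have c: "continuous_on {a..b} f"
  proof -
    have c0: "continuous_on {0..} f" by (rule cont_on0[of f f']) (erule d)
    show ?thesis by (rule continuous_on_subset[OF c0]) (use a in auto)
  qed
  have df: "f differentiable (at z)" if "a < z" "z < b" for z
  proof -
    have "0 < z" using that a by simp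
    have "(f has_real_derivative f' z) (at z)" using d \<open>0 < z\<close> by (rule deriv_at_pos)
    then show ?thesis by (auto simp: real_differentiable_def)
  qed
  obtain l z where "a < z" "z < b" "DERIV f z :> l" "f b - f a = (b - a) * l"
    using MVT[OF ab c df] by blast
  moreover have "l = f' z"
    using DERIV_unique[OF \<open>DERIV f z :> l\<close> deriv_at_pos[of f f' z]] d \<open>a < z\<close> a by simp
  ultimately show ?thesis by blast
qed

lemma antitone0:
  assumes d: "\<And>r. 0 \<le> r \<Longrightarrow> (f has_real_derivative f' r) (at r within {0..})"
    and np: "\<And>r. 0 \<le> r \<Longrightarrow> f' r \<le> 0"
    and a: "0 \<le> a" and ab: "a \<le> b"
  shows "f b \<le> f a"
proof (cases "a = b")
  case False
  then obtain z where "a < z" "z < b" "f b - f a = (b - a) * f' z"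
    using mvt0[OF d a] ab by force
  moreover have "f' z \<le> 0" using np \<open>a < z\<close> a by simp
  moreover have "(b - a) * f' z \<le> 0" by (rule mult_nonneg_nonpos) (use ab \<open>f' z \<le> 0\<close> in auto)
  ultimately show ?thesis by simp
qed simp

lemma concave_up:
  assumes d1: "\<And>r. 0 \<le> r \<Longrightarrow> (f has_real_derivative f' r) (at r within {0..})"
    and d2: "\<And>r. 0 \<le> r \<Longrightarrow> (f' has_real_derivative f'' r) (at r within {0..})"
    and np: "\<And>r. 0 \<le> r \<Longrightarrow> f'' r \<le> 0"
    and a: "0 \<le> a" and b: "0 \<le> b"
  shows "f b - f a \<le> f' a * (b - a)"
proof (cases a b rule: linorder_cases)
  case less
  then obtain z where z: "a < z" "z < b" "f b - f a = (b - a) * f' z"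
    using mvt0[OF d1 a] by force
  have "f' z \<le> f' a" using antitone0[OF d2 np a] z by simp
  then show ?thesis using z less by (simp add: mult.commute mult_right_mono)
next
  case greater
  then obtain z where z: "b < z" "z < a" "f a - f b = (a - b) * f' z"
    using mvt0[OF d1 b] by force
  have "f' a \<le> f' z" using antitone0[OF d2 np, of z a] z b by simp
  then have "(a-b)*f' a \<le> (a-b)*f' z" using greater by (intro mult_left_mono) auto
  then show ?thesis using z by (simp add: algebra_simps)
qed simp

lemma lip0:
  assumes d2: "\<And>r. 0 \<le> r \<Longrightarrow> (f' has_real_derivative f'' r) (at r within {0..})"
    and M: "\<And>r. 0 \<le> r \<Longrightarrow> r \<le> K \<Longrightarrow> \<bar>f'' r\<bar> \<le> M"
    and a: "0 \<le> a" "a \<le> K" and b: "0 \<le> b" "b \<le> K"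
  shows "\<bar>f' b - f' a\<bar> \<le> M * \<bar>b - a\<bar>"
proof (cases a b rule: linorder_cases)
  case less
  then obtain z where z: "a < z" "z < b" "f' b - f' a = (b - a) * f'' z"
    using mvt0[OF d2 a(1)] by force
  have "\<bar>f'' z\<bar> \<le> M" using M z a b by simp
  then show ?thesis using z less by (simp add: abs_mult mult.commute mult_right_mono)
next
  case greater
  then obtain z where z: "b < z" "z < a" "f' a - f' b = (a - b) * f'' z"
    using mvt0[OF d2 b(1)] by force
  have "\<bar>f'' z\<bar> \<le> M" using M z a b by simp
  then have "\<bar>f' a - f' b\<bar> \<le> M * \<bar>a - b\<bar>" using z greater by (simp add: abs_mult mult.commute mult_right_mono)
  then show ?thesis by (simp add: abs_minus_commute)
qed simp

lemma bound_psi'':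
  fixes g :: "real \<Rightarrow> real"
  assumes "continuous_on {0..} g"
  shows "\<exists>M. \<forall>r. 0 \<le> r \<longrightarrow> r \<le> K \<longrightarrow> \<bar>g r\<bar> \<le> M"
proof -
  have "compact (g ` {0..K})"
    by (rule compact_continuous_image) (auto intro: continuous_on_subset[OF assms] simp: compact_Icc)
  then obtain M where "\<forall>v \<in> g ` {0..K}. norm v \<le> M"
    using compact_imp_bounded bounded_iff by blast
  then show ?thesis by (intro exI[of _ M]) auto
qed


lemma ln_ratio_le: "0 < w \<Longrightarrow> 0 < q \<Longrightarrow> ln w - ln q \<le> (w - q) / q" for w q :: real
  using ln_le_minus_one[of "w/q"] by (simp add: ln_div diff_divide_distrib)

lemma ln_ratio_ge: "0 < w \<Longrightarrow> 0 < q \<Longrightarrow> (w - q) / w \<le> ln w - ln q" for w q :: real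
  using ln_le_minus_one[of "q/w"] by (simp add: ln_div diff_divide_distrib)

lemma div_le_self': "0 \<le> a \<Longrightarrow> 1 \<le> q \<Longrightarrow> a/q \<le> (a::real)"
  by (simp add: divide_le_eq mult_le_cancel_left1)

lemma S1:
  fixes r \<rho> p q w :: real
  assumes q: "q = 1 + r^2" and w: "w = q + 2*p + \<rho>^2" and w1: "1 \<le> w"
  shows "ln w - ln q - 2*p/q \<le> \<rho>^2/q"
proof -
  have "q > 0" using q by (simp add: add_pos_nonneg)
  then have "ln w - ln q \<le> (w - q)/q" using w1 by (intro ln_ratio_le) auto
  then show ?thesis using w by (simp add: add_divide_distrib)
qed

lemma poly_ineq:
  fixes r \<rho> :: real
  assumes r: "0 \<le> r" and \<rho>: "0 \<le> \<rho>"
  shows "(1 + (r+\<rho>)^2) * (1+r)^2 \<le> (1 + r^2) * ((1 + r) + 2*\<rho>)^2"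
proof -
  have "0 \<le> (1-r)^2" by simp
  then have h1: "(1+r)^2 \<le> 2*(1+r^2)" by (simp add: power2_eq_square algebra_simps)
  have h2: "(2*r*\<rho>+\<rho>^2)*(1+r)^2 \<le> (2*r*\<rho>+\<rho>^2) * (2*(1+r^2))"
    using h1 r \<rho> by (intro mult_left_mono) auto
  have h3: "4*r*\<rho>*(1+r^2) \<le> 4*\<rho>*(1+r)*(1+r^2)"
    using r \<rho> by (intro mult_right_mono) (auto simp: algebra_simps)
  have h4: "0 \<le> \<rho>^2*(1+r^2)" by simp
  show ?thesis using h2 h3 h4
    by (simp add: algebra_simps power2_eq_square)
qed

lemma S2:
  fixes r \<rho> p q w :: real
  assumes r: "0 \<le> r" and \<rho>: "0 \<le> \<rho>" and p: "p \<le> r*\<rho>"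
    and q: "q = 1 + r^2" and w: "w = q + 2*p + \<rho>^2" and w1: "1 \<le> w"
  shows "ln w - ln q \<le> 4 * ln (1 + \<rho>/(1+r))"
proof -
  have qp: "q > 0" using q by (simp add: add_pos_nonneg)
  have "w \<le> 1 + (r+\<rho>)^2" using w q p by (simp add: power2_eq_square algebra_simps)
  also have "\<dots> \<le> q * (1 + 2*\<rho>/(1+r))^2"
  proof -
    have "(1 + 2*\<rho>/(1+r)) = ((1+r) + 2*\<rho>)/(1+r)" using r by (simp add: field_simps)
    then have "q * (1 + 2*\<rho>/(1+r))^2 = (1 + r^2) * ((1 + r) + 2*\<rho>)^2 / (1+r)^2"
      using q by (simp add: power_divide)
    moreover have "(1 + (r+\<rho>)^2) \<le> (1 + r^2) * ((1 + r) + 2*\<rho>)^2 / (1+r)^2"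
      using poly_ineq[OF r \<rho>] r by (simp add: field_simps)
    ultimately show ?thesis by simp
  qed
  also have "\<dots> \<le> q * ((1 + \<rho>/(1+r))^2)^2"
  proof -
    have "0 \<le> \<rho>*\<rho>/(1+(r*r+r*2))" using r by (intro divide_nonneg_nonneg) auto
    then have "1 + 2*\<rho>/(1+r) \<le> (1 + \<rho>/(1+r))^2"
      by (simp add: power2_eq_square algebra_simps add_divide_distrib)
    moreover have "0 \<le> 1 + 2*\<rho>/(1+r)" using r \<rho> by simp
    ultimately show ?thesis using qp by (intro mult_left_mono power_mono) auto
  qed
  finally have "w \<le> q * (1 + \<rho>/(1+r))^4" by (simp add: power_mult[symmetric])
  then have "ln w \<le> ln (q * (1 + \<rho>/(1+r))^4)" using w1 by simp
  also have "\<dots> = ln q + 4 * ln (1 + \<rho>/(1+r))"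
  proof -
    have "0 < 1 + \<rho>/(1+r)" using r \<rho> by (simp add: add_pos_nonneg)
    then show ?thesis using qp by (simp add: ln_mult ln_realpow)
  qed
  finally show ?thesis by simp
qed

lemma S3:
  fixes r \<rho> q :: real
  assumes r: "0 \<le> r" and \<rho>: "0 \<le> \<rho>" "\<rho> \<le> 1" and q: "q = 1 + r^2"
  shows "\<rho>^2/q \<le> 4 * ln (1 + \<rho>/(1+r))"
proof -
  define W where "W = \<rho>/(1+r)"
  have W0: "0 \<le> W" and W1: "W \<le> 1" using r \<rho> by (auto simp: W_def field_simps)
  have "0 \<le> (1-r)^2" by simp
  then have "(1+r)^2 \<le> 2*q" using q by (simp add: power2_eq_square algebra_simps)
  then have "\<rho>^2/q \<le> \<rho>^2/((1+r)^2/2)"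
    using r q by (intro divide_left_mono) (auto simp: add_pos_nonneg)
  also have "\<dots> = 2*W^2" by (simp add: W_def power_divide)
  also have "\<dots> \<le> 4*W/(1+W)"
  proof -
    have "W*(1+W) \<le> 1*(1+1)" using W0 W1 by (intro mult_mono) auto
    then have "2*W*(W*(1+W)) \<le> 2*W*2" using W0 by (intro mult_left_mono) auto
    then have "2*W^2*(1+W) \<le> 4*W" by (simp add: power2_eq_square algebra_simps)
    then show ?thesis using W0 by (simp add: field_simps)
  qed
  also have "\<dots> \<le> 4 * ln (1 + W)"
  proof -
    have "(1+W-1)/(1+W) \<le> ln (1+W) - ln 1" using W0 by (intro ln_ratio_ge) auto
    then show ?thesis by simp
  qed
  finally show ?thesis by (simp add: W_def)
qed

lemma S4:
  fixes r \<rho> p q w :: real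
  assumes r: "0 \<le> r" and \<rho>: "0 \<le> \<rho>" "\<rho> \<le> 1" and p: "\<bar>p\<bar> \<le> r*\<rho>"
    and q: "q = 1 + r^2" and w: "w = q + 2*p + \<rho>^2" and w1: "1 \<le> w"
  shows "\<bar>ln w - ln q\<bar> \<le> (2*r+1)*\<rho>"
proof -
  have q1: "1 \<le> q" using q by simp
  have e: "\<bar>2*p + \<rho>^2\<bar> \<le> (2*r+1)*\<rho>"
  proof -
    have "\<rho>^2 \<le> \<rho>" using \<rho> by (simp add: power2_eq_square mult_left_le)
    then show ?thesis using p \<rho> abs_triangle_ineq[of "2*p" "\<rho>^2"] by (simp add: algebra_simps)
  qed
  have "ln w - ln q \<le> (w-q)/q" using q1 w1 by (intro ln_ratio_le) auto
  also have "\<dots> \<le> \<bar>w - q\<bar>/q" using q1 by (intro divide_right_mono) auto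
  also have "\<dots> \<le> \<bar>w - q\<bar>" using q1 by (intro div_le_self') auto
  finally have u: "ln w - ln q \<le> \<bar>w - q\<bar>" .
  have "(w-q)/w \<le> ln w - ln q" using q1 w1 by (intro ln_ratio_ge) auto
  moreover have "-\<bar>w - q\<bar> \<le> (w-q)/w"
  proof -
    have "-(w-q)/w \<le> \<bar>w - q\<bar>/w" using w1 by (intro divide_right_mono) auto
    also have "\<dots> \<le> \<bar>w - q\<bar>" using w1 by (intro div_le_self') auto
    finally have "-((w-q)/w) \<le> \<bar>w - q\<bar>" by (simp add: minus_divide_left)
    then show ?thesis by linarith
  qed
  ultimately have "\<bar>ln w - ln q\<bar> \<le> \<bar>w - q\<bar>" using u by linarith
  then show ?thesis using e w by simp
qed

lemma S5:
  fixes r \<rho> p q w :: real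
  assumes r: "0 \<le> r" and \<rho>: "0 \<le> \<rho>" "\<rho> \<le> 1" and p: "\<bar>p\<bar> \<le> r*\<rho>"
    and q: "q = 1 + r^2" and w: "w = q + 2*p + \<rho>^2" and w1: "1 \<le> w"
  shows "-((2*r+1)^2*\<rho>^2) \<le> ln w - ln q - 2*p/q"
proof -
  have q1: "1 \<le> q" using q by simp
  have ge: "(w-q)/w \<le> ln w - ln q" using q1 w1 by (intro ln_ratio_ge) auto
  have eq: "(w-q)/w - 2*p/q = (\<rho>^2*q - 2*p*(2*p+\<rho>^2))/(w*q)"
    using q1 w1 w by (simp add: field_simps)
  have bd: "-((2*r+1)^2*\<rho>^2) \<le> (\<rho>^2*q - 2*p*(2*p+\<rho>^2))/(w*q)"
  proof -
    have e: "\<bar>2*p + \<rho>^2\<bar> \<le> (2*r+1)*\<rho>"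
    proof -
      have "\<rho>^2 \<le> \<rho>" using \<rho> by (simp add: power2_eq_square mult_left_le)
      then show ?thesis using p \<rho> abs_triangle_ineq[of "2*p" "\<rho>^2"] by (simp add: algebra_simps)
    qed
    have "\<bar>2*p\<bar> \<le> (2*r+1)*\<rho>" using p \<rho> by (simp add: algebra_simps)
    then have a: "\<bar>2*p*(2*p+\<rho>^2)\<bar> \<le> ((2*r+1)*\<rho>)*((2*r+1)*\<rho>)"
      unfolding abs_mult[of "2*p"] using e
      by (intro mult_mono) auto
    have "1*1 \<le> w*q" using q1 w1 by (intro mult_mono) auto
    then have wq: "1 \<le> w*q" by simp
    have "-((2*r+1)^2*\<rho>^2) \<le> - \<bar>2*p*(2*p+\<rho>^2)\<bar>" using a by (simp add: power2_eq_square algebra_simps)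
    also have "\<dots> \<le> - \<bar>2*p*(2*p+\<rho>^2)\<bar> / (w*q)"
      using div_le_self'[of "\<bar>2*p*(2*p+\<rho>^2)\<bar>" "w*q"] wq by simp
    also have "\<dots> \<le> (\<rho>^2*q - 2*p*(2*p+\<rho>^2))/(w*q)"
    proof -
      have "0 \<le> \<rho>^2*q" using q1 by simp
      then have "- \<bar>2*p*(2*p+\<rho>^2)\<bar> \<le> \<rho>^2*q - 2*p*(2*p+\<rho>^2)"
        using abs_ge_self[of "2*p*(2*p+\<rho>^2)"] by linarith
      then show ?thesis using wq by (intro divide_right_mono) auto
    qed
    finally show ?thesis .
  qed
  have "-((2*r+1)^2*\<rho>^2) \<le> (w-q)/w - 2*p/q" by (subst eq) (rule bd)
  also have "\<dots> \<le> ln w - ln q - 2*p/q" using ge by (rule diff_right_mono)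
  finally show ?thesis .
qed


lemma jump_bounds:
  fixes \<psi> \<psi>' \<psi>'' :: "real \<Rightarrow> real" and r \<rho> p q w l M C f :: real
  assumes d1: "\<And>r. 0 \<le> r \<Longrightarrow> (\<psi> has_real_derivative \<psi>' r) (at r within {0..})"
    and d2: "\<And>r. 0 \<le> r \<Longrightarrow> (\<psi>' has_real_derivative \<psi>'' r) (at r within {0..})"
    and np: "\<And>r. 0 \<le> r \<Longrightarrow> \<psi>'' r \<le> 0"
    and p0: "\<And>r. 0 \<le> r \<Longrightarrow> 0 < \<psi>' r"
    and p1: "\<And>r. 0 \<le> r \<Longrightarrow> \<psi>' r \<le> 1"
    and pn: "\<And>r. 0 \<le> r \<Longrightarrow> 0 \<le> \<psi> r"
    and M0: "0 \<le> M"
    and M: "\<And>s. 0 \<le> s \<Longrightarrow> s \<le> ln (1 + (r+1)^2) \<Longrightarrow> \<bar>\<psi>'' s\<bar> \<le> M"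
    and C: "C = 1 + (M+1)*(2*r+1)^2"
    and r: "0 \<le> r" and \<rho>: "0 \<le> \<rho>" and p: "\<bar>p\<bar> \<le> r*\<rho>"
    and q: "q = 1 + r^2" and w: "w = q + 2*p + \<rho>^2" and w1: "1 \<le> w"
    and l: "0 < l" "l \<le> 1"
    and f: "f = \<psi> (ln w) - \<psi> (ln q) - (if \<rho> \<le> l then \<psi>' (ln q) * (2*p/q) else 0)"
  shows "f \<le> (if \<rho> < l then \<rho>^2/q else 4 * ln (1 + \<rho>/(1+r)))"
    and "\<bar>f\<bar> \<le> (if \<rho> < l then C*\<rho>^2 else 4 * ln (1 + \<rho>/(1+r)) + \<psi> (ln q) + C*l^2)"
proof -
  define A where "A = ln w"
  define B where "B = ln q"
  have q1: "1 \<le> q" using q by simp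
  have A0: "0 \<le> A" using w1 by (simp add: A_def)
  have B0: "0 \<le> B" using q1 by (simp add: B_def)
  have lnpos: "0 \<le> ln (1 + \<rho>/(1+r))" using r \<rho> by simp
  have C1: "1 \<le> C" using C M0 by simp
  have up1: "\<psi> A - \<psi> B \<le> \<psi>' B * (A - B)" by (rule concave_up[OF d1 d2 np B0 A0])
  have lo1: "\<psi> B - \<psi> A \<le> \<psi>' A * (B - A)" by (rule concave_up[OF d1 d2 np A0 B0])
  have small_up: "f \<le> \<rho>^2/q" and small_lo: "-(C*\<rho>^2) \<le> f" if "\<rho> \<le> l"
  proof -
    have fe: "f = \<psi> A - \<psi> B - \<psi>' B * (2*p/q)" using f that by (simp add: A_def B_def)
    have \<rho>1: "\<rho> \<le> 1" using that l by simp
    have X: "A - B - 2*p/q \<le> \<rho>^2/q" using S1[OF q w w1] by (simp add: A_def B_def)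
    have "f \<le> \<psi>' B * (A - B - 2*p/q)" using fe up1 by (simp add: algebra_simps)
    also have "\<dots> \<le> \<rho>^2/q"
    proof (cases "A - B - 2*p/q \<ge> 0")
      case True
      then have "\<psi>' B * (A - B - 2*p/q) \<le> 1 * (A - B - 2*p/q)"
        using p1[OF B0] by (intro mult_right_mono) auto
      then show ?thesis using X by simp
    next
      case False
      then have "\<psi>' B * (A - B - 2*p/q) \<le> 0" using p0[OF B0] by (intro less_imp_le[OF mult_pos_neg]) auto
      moreover have "0 \<le> \<rho>^2/q" using q1 by simp
      ultimately show ?thesis by linarith
    qed
    finally show "f \<le> \<rho>^2/q" .
    have Y: "-((2*r+1)^2*\<rho>^2) \<le> A - B - 2*p/q" using S5[OF r \<rho> \<rho>1 p q w w1] by (simp add: A_def B_def)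
    have Z: "\<bar>A - B\<bar> \<le> (2*r+1)*\<rho>" using S4[OF r \<rho> \<rho>1 p q w w1] by (simp add: A_def B_def)
    have AK: "A \<le> ln (1 + (r+1)^2)"
    proof -
      have "w \<le> 1 + (r+\<rho>)^2" using w q p by (simp add: power2_eq_square algebra_simps)
      also have "\<dots> \<le> 1 + (r+1)^2" using \<rho>1 r \<rho> by (simp add: power_mono)
      finally show ?thesis using w1 by (simp add: A_def)
    qed
    have BK: "B \<le> ln (1 + (r+1)^2)"
    proof -
      have "q \<le> 1 + (r+1)^2" using q r by (simp add: power_mono)
      then show ?thesis using q1 by (simp add: B_def)
    qed
    have L: "\<bar>\<psi>' A - \<psi>' B\<bar> \<le> M * \<bar>A - B\<bar>"
      by (rule lip0[OF d2 M B0 BK A0 AK])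
    have T1: "-(M*((2*r+1)*\<rho>)^2) \<le> (\<psi>' A - \<psi>' B) * (A - B)"
    proof -
      have "\<bar>(\<psi>' A - \<psi>' B) * (A - B)\<bar> \<le> (M * \<bar>A - B\<bar>) * \<bar>A - B\<bar>"
        unfolding abs_mult using L by (intro mult_right_mono) auto
      also have "\<dots> = M * (\<bar>A - B\<bar> * \<bar>A - B\<bar>)" by simp
      also have "\<dots> \<le> M * (((2*r+1)*\<rho>) * ((2*r+1)*\<rho>))"
        using Z M0 by (intro mult_left_mono mult_mono) auto
      also have "\<dots> = M * ((2*r+1)*\<rho>)^2" by (simp add: power2_eq_square)
      finally show ?thesis by linarith
    qed
    have T2: "-((2*r+1)^2*\<rho>^2) \<le> \<psi>' B * (A - B - 2*p/q)"
    proof (cases "A - B - 2*p/q \<ge> 0")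
      case True
      then have "0 \<le> \<psi>' B * (A - B - 2*p/q)" using p0[OF B0] by simp
      moreover have "0 \<le> (2*r+1)^2*\<rho>^2" by simp
      ultimately show ?thesis by linarith
    next
      case False
      then have "1 * (A - B - 2*p/q) \<le> \<psi>' B * (A - B - 2*p/q)"
        using p1[OF B0] by (intro mult_right_mono_neg) auto
      then show ?thesis using Y by simp
    qed
    have "f \<ge> (\<psi>' A - \<psi>' B) * (A - B) + \<psi>' B * (A - B - 2*p/q)"
      using fe lo1 by (simp add: algebra_simps)
    moreover have "-(C*\<rho>^2) \<le> -(M*((2*r+1)*\<rho>)^2) + -((2*r+1)^2*\<rho>^2)"
    proof -
      have e: "((2*r+1)*\<rho>)^2 = (2*r+1)^2*\<rho>^2" by (rule power_mult_distrib)
      have "C*\<rho>^2 = \<rho>^2 + M*((2*r+1)^2*\<rho>^2) + (2*r+1)^2*\<rho>^2" unfolding C by (simp add: algebra_simps)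
      then show ?thesis unfolding e by simp
    qed
    ultimately show "-(C*\<rho>^2) \<le> f" using T1 T2 by linarith
  qed
  have big_up: "f \<le> 4 * ln (1 + \<rho>/(1+r))" if "\<not> \<rho> < l"
  proof (cases "\<rho> \<le> l")
    case True
    then have "\<rho> = l" using that by simp
    then have "\<rho>^2/q \<le> 4 * ln (1 + \<rho>/(1+r))" using S3[OF r \<rho> _ q] l by simp
    then show ?thesis using small_up[OF True] by simp
  next
    case False
    then have fe: "f = \<psi> A - \<psi> B" using f by (simp add: A_def B_def)
    have S: "A - B \<le> 4 * ln (1 + \<rho>/(1+r))"
      using S2[OF r \<rho> _ q w w1] p by (simp add: A_def B_def)
    show ?thesis
    proof (cases "A - B \<ge> 0")
      case True
      then have "\<psi>' B * (A - B) \<le> 1 * (A - B)"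
        using p1[OF B0] by (intro mult_right_mono) auto
      then show ?thesis using fe up1 S by simp
    next
      case False
      then have "\<psi>' B * (A - B) \<le> 0" using p0[OF B0] by (intro less_imp_le[OF mult_pos_neg]) auto
      then show ?thesis using fe up1 lnpos by simp
    qed
  qed
  have big_lo: "-(\<psi> (ln q) + C*l^2) \<le> f" if "\<not> \<rho> < l"
  proof (cases "\<rho> \<le> l")
    case True
    then have "\<rho> = l" using that by simp
    then show ?thesis using small_lo[OF True] pn[OF B0] by (simp add: B_def)
  next
    case False
    then have fe: "f = \<psi> A - \<psi> B" using f by (simp add: A_def B_def)
    moreover have "0 \<le> C*l^2" using C1 by simp
    ultimately show ?thesis using pn[OF A0] by (simp add: B_def)
  qed
  show "f \<le> (if \<rho> < l then \<rho>^2/q else 4 * ln (1 + \<rho>/(1+r)))"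
    using small_up big_up by auto
  show "\<bar>f\<bar> \<le> (if \<rho> < l then C*\<rho>^2 else 4 * ln (1 + \<rho>/(1+r)) + \<psi> (ln q) + C*l^2)"
  proof (cases "\<rho> < l")
    case True
    have "\<rho>^2/q \<le> C*\<rho>^2"
    proof -
      have "\<rho>^2/q \<le> \<rho>^2" using q1 by (intro div_le_self') auto
      also have "\<dots> \<le> C*\<rho>^2" using mult_right_mono[OF C1, of "\<rho>^2"] by simp
      finally show ?thesis .
    qed
    then show ?thesis using True small_up[of] small_lo[of] by auto
  next
    case False
    have "0 \<le> \<psi> (ln q)" using pn[OF B0] by (simp add: B_def)
    moreover have "0 \<le> C*l^2" using C1 by simp
    ultimately show ?thesis using False big_up[OF False] big_lo[OF False] lnpos by (simp add: abs_le_iff)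
  qed
qed


lemma set_int:
  fixes M :: "'a measure" and F :: "'a \<Rightarrow> real"
  assumes S: "S \<in> sets M" and Fm: "F \<in> borel_measurable M" and F0: "\<And>z. 0 \<le> F z"
    and fin: "(\<integral>\<^sup>+ z \<in> S. ennreal (F z) \<partial>M) < \<infinity>"
  shows "integrable M (\<lambda>z. indicator S z * F z)"
    and "(\<integral> z. indicator S z * F z \<partial>M) = enn2real (\<integral>\<^sup>+ z \<in> S. ennreal (F z) \<partial>M)"
proof -
  have e: "(\<integral>\<^sup>+ z. ennreal (indicator S z * F z) \<partial>M) = (\<integral>\<^sup>+ z \<in> S. ennreal (F z) \<partial>M)"
    by (rule nn_integral_cong) (simp add: indicator_def)
  have m: "(\<lambda>z. indicator S z * F z) \<in> borel_measurable M" using S Fm by measurable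
  have n: "\<And>z. norm (indicator S z * F z) = indicator S z * F z" using F0 by (simp add: indicator_def)
  show "integrable M (\<lambda>z. indicator S z * F z)"
    by (rule integrableI_bounded[OF m]) (simp only: n e fin)
  show "(\<integral> z. indicator S z * F z \<partial>M) = enn2real (\<integral>\<^sup>+ z \<in> S. ennreal (F z) \<partial>M)"
    by (subst integral_eq_nn_integral[OF m]) (auto simp: F0 e)
qed

lemma hess_V:
  fixes y x :: "real^'n"
  assumes d1: "\<And>r. 0 \<le> r \<Longrightarrow> (\<psi> has_real_derivative \<psi>' r) (at r within {0..})"
  assumes d2: "\<And>r. 0 \<le> r \<Longrightarrow> (\<psi>' has_real_derivative \<psi>'' r) (at r within {0..})"
  shows "hess (V_fun \<psi> y) x = (\<chi> i j. \<psi>'' (ln (1 + norm (x - y) ^ 2)) * ((2 / (1 + norm (x - y) ^ 2)) * (x-y)$i) * ((2 / (1 + norm (x - y) ^ 2)) * (x-y)$j)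
      + \<psi>' (ln (1 + norm (x - y) ^ 2)) * ((if i = j then 2 / (1 + norm (x - y) ^ 2) else 0) - (4 / (1 + norm (x - y) ^ 2)^2) * (x-y)$j * (x-y)$i))"
  unfolding hess_def vec_eq_iff
proof (intro allI)
  fix i j :: 'n
  define Q where "Q = 1 + norm (x - y) ^ 2"
  have Q: "0 < Q" unfolding Q_def by (simp add: add_pos_nonneg)
  have ax: "axis i (1::real) $ j = (if j = i then 1 else 0)" by (simp add: axis_def)
  show "(\<chi> i j. frechet_derivative (\<lambda>ya. grad (V_fun \<psi> y) ya $ j) (at x) (axis i 1)) $ i $ j =
         (\<chi> i j. \<psi>'' (ln (1 + norm (x - y) ^ 2)) * ((2 / (1 + norm (x - y) ^ 2)) * (x-y)$i) * ((2 / (1 + norm (x - y) ^ 2)) * (x-y)$j)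
      + \<psi>' (ln (1 + norm (x - y) ^ 2)) * ((if i = j then 2 / (1 + norm (x - y) ^ 2) else 0) - (4 / (1 + norm (x - y) ^ 2)^2) * (x-y)$j * (x-y)$i)) $ i $ j"
    unfolding Q_def[symmetric]
    apply (simp only: vec_lambda_beta frechet_derivative_at[OF gradj_deriv[OF d1 d2], symmetric] inner_axis ax Q_def[symmetric])
    using Q by (auto simp: field_simps power2_eq_square)
qed

theorem lemma2p3:
  fixes a :: "real \<Rightarrow> real^'n \<Rightarrow> real^'n^'n"
    and b :: "real \<Rightarrow> real^'n \<Rightarrow> real^'n"
    and \<nu> :: "real \<Rightarrow> real^'n \<Rightarrow> (real^'n) measure"
    and l :: real
    and \<psi> \<psi>' \<psi>'' :: "real \<Rightarrow> real"
    and y x :: "real^'n" and t :: real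
  assumes l_pos: "0 < l" and l_le: "l \<le> 1 / sqrt 2"
    and a_sym: "\<And>s z. transpose (a s z) = a s z"
    and a_nonneg: "\<And>s z v. 0 \<le> v \<bullet> (a s z *v v)"
    and a_meas: "(\<lambda>(s, z). a s z) \<in> borel_measurable borel"
    and b_meas: "(\<lambda>(s, z). b s z) \<in> borel_measurable borel"
    and levy: "\<And>s z. levy_measure (\<nu> s z)"
    and g_fin: "\<And>s z. g_nu \<nu> l s z < \<infinity>"
    and nu_fin: "\<And>s z. emeasure (\<nu> s z) (- ball 0 l) < \<infinity>"
    and psi_d1: "\<And>r. 0 \<le> r \<Longrightarrow> (\<psi> has_real_derivative \<psi>' r) (at r within {0..})"
    and psi_d2: "\<And>r. 0 \<le> r \<Longrightarrow> (\<psi>' has_real_derivative \<psi>'' r) (at r within {0..})"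
    and psi_C2: "continuous_on {0..} \<psi>''"
    and psi_nonneg: "\<And>r. 0 \<le> r \<Longrightarrow> 0 \<le> \<psi> r"
    and psi_lim: "filterlim \<psi> at_top at_top"
    and psi'_pos: "\<And>r. 0 \<le> r \<Longrightarrow> 0 < \<psi>' r"
    and psi'_le1: "\<And>r. 0 \<le> r \<Longrightarrow> \<psi>' r \<le> 1"
    and psi''_nonpos: "\<And>r. 0 \<le> r \<Longrightarrow> \<psi>'' r \<le> 0"
    and t_nonneg: "0 \<le> t"
    and H_fin: "H_nu \<nu> l t x y < \<infinity>"
  shows "integrable (\<nu> t x)
           (\<lambda>z. V_fun \<psi> y (x + z) - V_fun \<psi> y x
                 - (if norm z \<le> l then z \<bullet> grad (V_fun \<psi> y) x else 0))
         \<and> gen_op a b \<nu> l t (V_fun \<psi> y) x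
           \<le> 2 * ((trace (a t x) + max 0 ((x - y) \<bullet> b t x) + enn2real (g_nu \<nu> l t x))
                    / (1 + norm (x - y) ^ 2)
                  + 2 * enn2real (H_nu \<nu> l t x y))"
proof -
  define u where "u = x - y"
  define r where "r = norm u"
  define q where "q = 1 + r^2"
  define h0 where "h0 = ln q"
  have r0: "0 \<le> r" by (simp add: r_def)
  have q1: "1 \<le> q" by (simp add: q_def)
  have qpos: "0 < q" using q1 by simp
  have h00: "0 \<le> h0" using q1 by (simp add: h0_def)
  have nq: "1 + norm (x - y)^2 = q" by (simp add: q_def r_def u_def)
  have gradV: "grad (V_fun \<psi> y) x = (\<psi>' h0 * 2 / q) *\<^sub>R u"
    using grad_V[OF psi_d1, of y x] by (simp add: nq h0_def u_def)
  have hessV: "hess (V_fun \<psi> y) x = (\<chi> i j. \<psi>'' h0 * ((2/q) * u$i) * ((2/q) * u$j) + \<psi>' h0 * ((if i = j then 2/q else 0) - (4/q^2) * u$j * u$i))"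
    using hess_V[where \<psi>=\<psi> and \<psi>'=\<psi>' and \<psi>''=\<psi>'' and y=y and x=x, OF psi_d1 psi_d2] unfolding nq h0_def u_def .
  have trA: "0 \<le> trace (a t x)" by (rule trace_nonneg) (rule a_nonneg)
  have uAu: "0 \<le> u \<bullet> (a t x *v u)" by (rule a_nonneg)
  have T: "trace (a t x ** hess (V_fun \<psi> y) x) \<le> 2 * trace (a t x) / q"
  proof -
    have "trace (a t x ** hess (V_fun \<psi> y) x) = \<psi>'' h0 * ((2/q)^2 * (u \<bullet> (a t x *v u))) + \<psi>' h0 * ((2/q) * trace (a t x) - (4/q^2) * (u \<bullet> (a t x *v u)))"
      unfolding hessV by (rule trace_eq)
    also have "\<dots> \<le> 0 + \<psi>' h0 * ((2/q) * trace (a t x))"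
    proof (rule add_mono)
      show "\<psi>'' h0 * ((2/q)^2 * (u \<bullet> (a t x *v u))) \<le> 0"
        using psi''_nonpos[OF h00] uAu by (intro mult_nonpos_nonneg) auto
      show "\<psi>' h0 * ((2/q) * trace (a t x) - (4/q^2) * (u \<bullet> (a t x *v u))) \<le> \<psi>' h0 * ((2/q) * trace (a t x))"
        using psi'_pos[OF h00] uAu qpos by (intro mult_left_mono) auto
    qed
    also have "\<dots> \<le> 1 * ((2/q) * trace (a t x))"
      using psi'_le1[OF h00] trA qpos by (subst add_0_left, intro mult_right_mono) auto
    finally show ?thesis by simp
  qed
  have D: "b t x \<bullet> grad (V_fun \<psi> y) x \<le> 2 * max 0 ((x - y) \<bullet> b t x) / q"
  proof -
    have "b t x \<bullet> grad (V_fun \<psi> y) x = \<psi>' h0 * (2 * (u \<bullet> b t x) / q)" unfolding gradV by (simp add: inner_commute)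
    also have "\<dots> \<le> 1 * (2 * max 0 (u \<bullet> b t x) / q)"
    proof (cases "0 \<le> u \<bullet> b t x")
      case True then show ?thesis using psi'_le1[OF h00] psi'_pos[OF h00] qpos by (intro mult_mono) auto
    next
      case False
      have "2 * (u \<bullet> b t x) / q \<le> 0" using False qpos by (simp add: divide_nonpos_pos)
      then have "\<psi>' h0 * (2 * (u \<bullet> b t x) / q) \<le> 0" using psi'_pos[OF h00] by (intro mult_nonneg_nonpos) auto
      then show ?thesis using False by simp
    qed
    finally show ?thesis by (simp add: u_def)
  qed
  define F where "F z = V_fun \<psi> y (x + z) - V_fun \<psi> y x - (if norm z \<le> l then z \<bullet> grad (V_fun \<psi> y) x else 0)" for z
  define L where "L z = ln (1 + norm z / (1 + r))" for z :: "real^'n"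
  obtain M0 where M0: "\<And>s. 0 \<le> s \<Longrightarrow> s \<le> ln (1 + (r+1)^2) \<Longrightarrow> \<bar>\<psi>'' s\<bar> \<le> M0"
    using bound_psi''[OF psi_C2, of "ln (1 + (r+1)^2)"] by blast
  define M where "M = max M0 0"
  have M: "\<And>s. 0 \<le> s \<Longrightarrow> s \<le> ln (1 + (r+1)^2) \<Longrightarrow> \<bar>\<psi>'' s\<bar> \<le> M"
    using M0 unfolding M_def by (meson max.coboundedI1)
  have Mnn: "0 \<le> M" by (simp add: M_def)
  define C where "C = 1 + (M+1)*(2*r+1)^2"
  have l1: "l \<le> 1"
  proof -
    have "1 / sqrt 2 \<le> 1" by simp
    then show ?thesis using l_le by linarith
  qed
  have Fb: "F z \<le> (if norm z < l then norm z^2/q else 4 * L z)"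
    and Fa: "\<bar>F z\<bar> \<le> (if norm z < l then C * norm z^2 else 4 * L z + \<psi> h0 + C*l^2)" for z
  proof -
    have w: "1 + norm (u+z)^2 = q + 2*(u \<bullet> z) + norm z^2"
      by (simp add: q_def r_def power2_norm_eq_inner inner_add_left inner_add_right inner_commute)
    have xz: "x + z - y = u + z" by (simp add: u_def algebra_simps)
    have Vxz: "V_fun \<psi> y (x+z) = \<psi> (ln (1 + norm (u+z)^2))" by (simp only: V_fun_def xz)
    have Vx: "V_fun \<psi> y x = \<psi> h0" by (simp add: V_fun_def h0_def nq)
    have zg: "z \<bullet> grad (V_fun \<psi> y) x = \<psi>' h0 * (2*(u \<bullet> z)/q)" by (simp add: gradV inner_commute)
    have fe: "F z = \<psi> (ln (1 + norm (u+z)^2)) - \<psi> (ln q) - (if norm z \<le> l then \<psi>' (ln q) * (2*(u \<bullet> z)/q) else 0)"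
      by (simp add: F_def Vxz Vx zg h0_def)
    have p: "\<bar>u \<bullet> z\<bar> \<le> r * norm z" using Cauchy_Schwarz_ineq2 by (simp add: r_def)
    have w1: "1 \<le> 1 + norm (u+z)^2" by simp
    note JB = jump_bounds[OF psi_d1 psi_d2 psi''_nonpos psi'_pos psi'_le1 psi_nonneg Mnn M C_def r0 norm_ge_zero p q_def w w1 l_pos l1 fe]
    show "F z \<le> (if norm z < l then norm z^2/q else 4 * L z)" using JB(1) unfolding L_def .
    show "\<bar>F z\<bar> \<le> (if norm z < l then C * norm z^2 else 4 * L z + \<psi> h0 + C*l^2)" using JB(2) unfolding L_def h0_def .
  qed
  have sets: "sets (\<nu> t x) = sets borel" using levy by (simp add: levy_measure_def)
  have mc: "borel_measurable (\<nu> t x) = borel_measurable borel" by (rule measurable_cong_sets[OF sets refl])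
  have Bs: "ball 0 l \<in> sets (\<nu> t x)" by (simp add: sets)
  have Bcs: "- ball 0 l \<in> sets (\<nu> t x)" by (simp add: sets borel_comp)
  have Vc: "continuous_on UNIV (V_fun \<psi> y)"
    by (rule has_derivative_continuous_on) (use V_deriv[OF psi_d1] in auto)
  have Vm: "(\<lambda>z. V_fun \<psi> y (x + z)) \<in> borel_measurable borel"
    by (rule borel_measurable_continuous_onI, rule continuous_on_compose2[OF Vc]) (auto intro!: continuous_intros)
  have Fm0: "F \<in> borel_measurable borel"
    unfolding F_def[abs_def] using Vm by measurable
  have Fm: "F \<in> borel_measurable (\<nu> t x)" unfolding mc by (rule Fm0)
  have nm: "(\<lambda>z::real^'n. norm z ^ 2) \<in> borel_measurable (\<nu> t x)" unfolding mc by measurable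
  have Lm: "L \<in> borel_measurable (\<nu> t x)" unfolding mc L_def[abs_def] by measurable
  have L0: "\<And>z. 0 \<le> L z" using r0 by (simp add: L_def)
  note SG = set_int[OF Bs nm _ g_fin[of t x, unfolded g_nu_def]]
  have Hf: "(\<integral>\<^sup>+ z \<in> - ball 0 l. ennreal (L z) \<partial>(\<nu> t x)) < \<infinity>"
    using H_fin unfolding H_nu_def L_def r_def u_def .
  note SH = set_int[OF Bcs Lm L0 Hf]
  have ic: "integrable (\<nu> t x) (indicator (- ball 0 l) :: _ \<Rightarrow> real)"
    using Bcs nu_fin by (rule integrable_real_indicator)
  have ig: "integrable (\<nu> t x) (\<lambda>z. indicator (ball 0 l) z * norm z ^ 2)" using SG(1) by simp
  have ih: "integrable (\<nu> t x) (\<lambda>z. indicator (- ball 0 l) z * L z)" using SH(1) .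
  define Gi where "Gi z = C * (indicator (ball 0 l) z * norm z ^ 2) + 4 * (indicator (- ball 0 l) z * L z) + (\<psi> h0 + C*l^2) * indicator (- ball 0 l) z" for z
  define Bu where "Bu z = (1/q) * (indicator (ball 0 l) z * norm z ^ 2) + 4 * (indicator (- ball 0 l) z * L z)" for z
  have iGi: "integrable (\<nu> t x) Gi" unfolding Gi_def[abs_def] using ig ih ic by auto
  have iBu: "integrable (\<nu> t x) Bu" unfolding Bu_def[abs_def] using ig ih by auto
  have FG: "norm (F z) \<le> norm (Gi z)" for z
  proof -
    have "\<bar>F z\<bar> \<le> Gi z" using Fa[of z] by (cases "norm z < l") (auto simp: Gi_def indicator_def)
    then show ?thesis by simp
  qed
  have intF: "integrable (\<nu> t x) F"
    by (rule Bochner_Integration.integrable_bound[OF iGi Fm]) (rule AE_I2, rule FG)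
  have FB: "F z \<le> Bu z" for z
    using Fb[of z] by (cases "norm z < l") (auto simp: Bu_def indicator_def)
  define G where "G = enn2real (g_nu \<nu> l t x)"
  define HH where "HH = enn2real (H_nu \<nu> l t x y)"
  have G0: "0 \<le> G" by (simp add: G_def)
  have intB: "(\<integral>z. Bu z \<partial>(\<nu> t x)) = G / q + 4 * HH"
  proof -
    have "(\<integral>z. Bu z \<partial>(\<nu> t x)) = (1/q) * (\<integral>z. indicator (ball 0 l) z * norm z ^ 2 \<partial>(\<nu> t x)) + 4 * (\<integral>z. indicator (- ball 0 l) z * L z \<partial>(\<nu> t x))"
      unfolding Bu_def using ig ih by simp
    also have "(\<integral>z. indicator (ball 0 l) z * norm z ^ 2 \<partial>(\<nu> t x)) = G"
      using SG(2) by (simp add: G_def g_nu_def)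
    also have "(\<integral>z. indicator (- ball 0 l) z * L z \<partial>(\<nu> t x)) = HH"
      using SH(2) by (simp add: HH_def H_nu_def L_def r_def u_def)
    finally show ?thesis by simp
  qed
  have J: "(\<integral>z. F z \<partial>(\<nu> t x)) \<le> G / q + 4 * HH"
    using integral_mono[OF intF iBu FB] intB by simp
  have gen: "gen_op a b \<nu> l t (V_fun \<psi> y) x = trace (a t x ** hess (V_fun \<psi> y) x) + b t x \<bullet> grad (V_fun \<psi> y) x + (\<integral>z. F z \<partial>(\<nu> t x))"
    unfolding gen_op_def F_def ..
  have fin: "gen_op a b \<nu> l t (V_fun \<psi> y) x \<le> 2 * ((trace (a t x) + max 0 ((x - y) \<bullet> b t x) + G) / q + 2 * HH)"
  proof -
    have e: "(trace (a t x) + max 0 ((x - y) \<bullet> b t x) + G) / q = trace (a t x) / q + max 0 ((x - y) \<bullet> b t x) / q + G / q"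
      by (simp add: add_divide_distrib)
    have "0 \<le> G / q" using G0 qpos by simp
    then show ?thesis unfolding gen e using T D J by simp
  qed
  have intF': "integrable (\<nu> t x) (\<lambda>z. V_fun \<psi> y (x + z) - V_fun \<psi> y x - (if norm z \<le> l then z \<bullet> grad (V_fun \<psi> y) x else 0))"
    using intF unfolding F_def .
  show ?thesis unfolding nq using intF' fin unfolding G_def HH_def by simp
qed

end
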